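(* Let $G$ be a connected graph, let $L$ be a list-assignment with $|L(u)|\ge\deg(u)+1$ for all $u\in V(G)$, and let $\alpha$ be an $L$-colouring. Fix $v,w\in V(G)$, let $d:=\mathrm{dist}(v,w)$, and let $P$ be a shortest $v,w$-path. If $v$ is unfrozen under $\alpha$, then there exists a recolouring sequence $\mathcal{S}$ from $\alpha$ to some $L$-colouring $\gamma$ such that (i) $w$ is unfrozen under $\gamma$, (ii) every vertex recoloured during $\mathcal{S}$ belongs to $V(P)\setminus\{w\}$, and (iii) $|\mathcal{S}|\le d$. Moreover, if $|L(v)|\ge\deg(v)+2$, then $v$ is also unfrozen under $\gamma$.
   Context: An $L$-colouring is a proper colouring $\varphi$ with $\varphi(v)\in L(v)$ for all $v$. A recolouring sequence is a sequence of single-vertex recolouring steps, each changing the colour of one vertex to another colour of its list so that the colouring remains proper; $|\mathcal{S}|$ is its number of steps. A vertex $u$ is frozen under $\varphi$ if every colour of $L(u)\setminus\{\varphi(u)\}$ appears on a neighbour of $u$, and unfrozen otherwise. *)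

theory Defs
  imports Main
begin

definition simple_graph :: "'v set \<Rightarrow> ('v \<Rightarrow> 'v \<Rightarrow> bool) \<Rightarrow> bool" where
  "simple_graph V E \<longleftrightarrow> finite V \<and> (\<forall>x y. E x y \<longrightarrow> x \<in> V \<and> y \<in> V)
     \<and> (\<forall>x y. E x y \<longrightarrow> E y x) \<and> (\<forall>x. \<not> E x x)"

definition nbrs :: "'v set \<Rightarrow> ('v \<Rightarrow> 'v \<Rightarrow> bool) \<Rightarrow> 'v \<Rightarrow> 'v set" where
  "nbrs V E u = {x \<in> V. E u x}"

definition deg :: "'v set \<Rightarrow> ('v \<Rightarrow> 'v \<Rightarrow> bool) \<Rightarrow> 'v \<Rightarrow> nat" where
  "deg V E u = card (nbrs V E u)"

definition is_walk :: "'v set \<Rightarrow> ('v \<Rightarrow> 'v \<Rightarrow> bool) \<Rightarrow> 'v list \<Rightarrow> bool" where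
  "is_walk V E p \<longleftrightarrow> p \<noteq> [] \<and> set p \<subseteq> V \<and> (\<forall>i. Suc i < length p \<longrightarrow> E (p ! i) (p ! Suc i))"

definition walk_between :: "'v set \<Rightarrow> ('v \<Rightarrow> 'v \<Rightarrow> bool) \<Rightarrow> 'v \<Rightarrow> 'v \<Rightarrow> 'v list \<Rightarrow> bool" where
  "walk_between V E u w p \<longleftrightarrow> is_walk V E p \<and> hd p = u \<and> last p = w"

definition connected_graph :: "'v set \<Rightarrow> ('v \<Rightarrow> 'v \<Rightarrow> bool) \<Rightarrow> bool" where
  "connected_graph V E \<longleftrightarrow> V \<noteq> {} \<and> (\<forall>u\<in>V. \<forall>w\<in>V. \<exists>p. walk_between V E u w p)"

definition dist :: "'v set \<Rightarrow> ('v \<Rightarrow> 'v \<Rightarrow> bool) \<Rightarrow> 'v \<Rightarrow> 'v \<Rightarrow> nat" where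
  "dist V E u w = (LEAST n. \<exists>p. walk_between V E u w p \<and> length p = Suc n)"

text \<open>A shortest u,w-path: a walk from u to w with exactly dist(u,w) edges (hence a path).\<close>
definition shortest_path :: "'v set \<Rightarrow> ('v \<Rightarrow> 'v \<Rightarrow> bool) \<Rightarrow> 'v \<Rightarrow> 'v \<Rightarrow> 'v list \<Rightarrow> bool" where
  "shortest_path V E u w p \<longleftrightarrow> walk_between V E u w p \<and> length p = Suc (dist V E u w)"

definition L_colouring :: "'v set \<Rightarrow> ('v \<Rightarrow> 'v \<Rightarrow> bool) \<Rightarrow> ('v \<Rightarrow> 'c set) \<Rightarrow> ('v \<Rightarrow> 'c) \<Rightarrow> bool" where
  "L_colouring V E L \<phi> \<longleftrightarrow> (\<forall>u\<in>V. \<phi> u \<in> L u) \<and> (\<forall>x\<in>V. \<forall>y\<in>V. E x y \<longrightarrow> \<phi> x \<noteq> \<phi> y)"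

definition frozen :: "'v set \<Rightarrow> ('v \<Rightarrow> 'v \<Rightarrow> bool) \<Rightarrow> ('v \<Rightarrow> 'c set) \<Rightarrow> ('v \<Rightarrow> 'c) \<Rightarrow> 'v \<Rightarrow> bool" where
  "frozen V E L \<phi> u \<longleftrightarrow> (\<forall>c \<in> L u - {\<phi> u}. \<exists>x \<in> nbrs V E u. \<phi> x = c)"

definition unfrozen :: "'v set \<Rightarrow> ('v \<Rightarrow> 'v \<Rightarrow> bool) \<Rightarrow> ('v \<Rightarrow> 'c set) \<Rightarrow> ('v \<Rightarrow> 'c) \<Rightarrow> 'v \<Rightarrow> bool" where
  "unfrozen V E L \<phi> u \<longleftrightarrow> \<not> frozen V E L \<phi> u"

fun recol_seq :: "'v set \<Rightarrow> ('v \<Rightarrow> 'v \<Rightarrow> bool) \<Rightarrow> ('v \<Rightarrow> 'c set) \<Rightarrow> ('v \<Rightarrow> 'c) \<Rightarrow> ('v \<times> 'c) list \<Rightarrow> bool" where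
  "recol_seq V E L \<phi> [] = True"
| "recol_seq V E L \<phi> ((x, c) # S) \<longleftrightarrow>
     x \<in> V \<and> c \<in> L x \<and> c \<noteq> \<phi> x \<and> L_colouring V E L (\<phi>(x := c)) \<and> recol_seq V E L (\<phi>(x := c)) S"

fun apply_seq :: "('v \<Rightarrow> 'c) \<Rightarrow> ('v \<times> 'c) list \<Rightarrow> ('v \<Rightarrow> 'c)" where
  "apply_seq \<phi> [] = \<phi>"
| "apply_seq \<phi> ((x, c) # S) = apply_seq (\<phi>(x := c)) S"

end

theory Submission
  imports Defs
begin

lemma nbrs_finite: "simple_graph V E \<Longrightarrow> finite (nbrs V E u)"
  unfolding simple_graph_def nbrs_def by auto

lemma recolour_ok:
  assumes G: "simple_graph V E" and col: "L_colouring V E L \<phi>" and u: "u \<in> V"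
    and unf: "unfrozen V E L \<phi> u"
  shows "\<exists>c. c \<in> L u \<and> c \<noteq> \<phi> u \<and> L_colouring V E L (\<phi>(u := c))"
proof -
  from unf obtain c where c: "c \<in> L u" "c \<noteq> \<phi> u" "\<forall>x\<in>nbrs V E u. \<phi> x \<noteq> c"
    unfolding unfrozen_def frozen_def by blast
  have "L_colouring V E L (\<phi>(u := c))"
    unfolding L_colouring_def
  proof (intro conjI ballI impI)
    fix x assume "x \<in> V" then show "(\<phi>(u := c)) x \<in> L x"
      using col c unfolding L_colouring_def by auto
  next
    fix x y assume xy: "x \<in> V" "y \<in> V" "E x y"
    have ne: "x \<noteq> y" using G xy unfolding simple_graph_def by blast
    have "E y x" using G xy unfolding simple_graph_def by blast
    show "(\<phi>(u := c)) x \<noteq> (\<phi>(u := c)) y"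
    proof (cases "x = u")
      case True then show ?thesis using ne c(3) xy unfolding nbrs_def by auto
    next
      case False
      show ?thesis
      proof (cases "y = u")
        case True then show ?thesis using False c(3) xy \<open>E y x\<close> unfolding nbrs_def by auto
      next
        case False2: False
        then show ?thesis using False col xy unfolding L_colouring_def by auto
      qed
    qed
  qed
  with c show ?thesis by blast
qed

lemma unfreeze:
  assumes G: "simple_graph V E" and fin: "finite (L q)" and cd: "card (L q) \<ge> deg V E q + 1"
    and q: "q \<in> V" and fr: "frozen V E L \<phi> q" and e: "E u q" and cu: "c \<noteq> \<phi> u"
  shows "unfrozen V E L (\<phi>(u := c)) q"
proof -
  let ?N = "nbrs V E q"
  let ?A = "L q - {\<phi> q}"
  have fN: "finite ?N" using G by (rule nbrs_finite)
  have sub: "?A \<subseteq> \<phi> ` ?N" 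
  proof
    fix d assume "d \<in> ?A"
    then obtain x where "x \<in> ?N" "\<phi> x = d" using fr unfolding frozen_def by blast
    then show "d \<in> \<phi> ` ?N" by blast
  qed
  have cA: "card ?A \<ge> card ?N"
  proof (cases "\<phi> q \<in> L q")
    case True
    then have "card ?A = card (L q) - 1" using fin by simp
    then show ?thesis using cd unfolding deg_def by simp
  next
    case False
    then have "?A = L q" by blast
    then show ?thesis using cd unfolding deg_def by simp
  qed
  have "card (\<phi> ` ?N) \<le> card ?N" using fN card_image_le by blast
  then have eqA: "?A = \<phi> ` ?N"
    using card_seteq[OF finite_imageI[OF fN] sub] cA by linarith
  then have "card (\<phi> ` ?N) = card ?N" using cA \<open>card (\<phi> ` ?N) \<le> card ?N\<close> by simp
  then have inj: "inj_on \<phi> ?N" using fN eq_card_imp_inj_on by blast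
  have uN: "u \<in> ?N" using G e unfolding simple_graph_def nbrs_def by blast
  have uq: "u \<noteq> q" using G e unfolding simple_graph_def by blast
  have "\<phi> u \<in> ?A" using eqA uN by blast
  moreover have "\<forall>x\<in>?N. (\<phi>(u := c)) x \<noteq> \<phi> u"
  proof
    fix x assume x: "x \<in> ?N"
    show "(\<phi>(u := c)) x \<noteq> \<phi> u"
    proof (cases "x = u")
      case True then show ?thesis using cu by simp
    next
      case False then show ?thesis using inj x uN by (auto dest: inj_onD)
    qed
  qed
  ultimately show ?thesis using uq unfolding unfrozen_def frozen_def
    by (metis fun_upd_other)
qed

lemma main_walk:
  assumes G: "simple_graph V E" and LL: "\<forall>u\<in>V. finite (L u) \<and> card (L u) \<ge> deg V E u + 1"
  shows "is_walk V E p \<Longrightarrow> L_colouring V E L \<phi> \<Longrightarrow> unfrozen V E L \<phi> (hd p) \<Longrightarrow>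
    \<exists>S. recol_seq V E L \<phi> S \<and> unfrozen V E L (apply_seq \<phi> S) (last p)
      \<and> (\<forall>(x, c) \<in> set S. x \<in> set p - {last p}) \<and> length S \<le> length p - 1"
proof (induction p arbitrary: \<phi>)
  case Nil then show ?case by (simp add: is_walk_def)
next
  case (Cons u p')
  show ?case
  proof (cases "u = last (u # p')")
    case True
    then show ?thesis using Cons.prems by (intro exI[of _ "[]"]) simp
  next
    case False
    then obtain q rest where p': "p' = q # rest" by (cases p') auto
    have lastp: "last (u # p') = last p'" using p' by simp
    have w': "is_walk V E p'" using Cons.prems(1) p' unfolding is_walk_def
      by (auto simp: nth_Cons_Suc)
    have euq: "E u q" using Cons.prems(1) p' unfolding is_walk_def by fastforce
    have uV: "u \<in> V" and qV: "q \<in> V" using Cons.prems(1) p' unfolding is_walk_def by auto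
    show ?thesis
    proof (cases "unfrozen V E L \<phi> q")
      case True
      from Cons.IH[OF w' Cons.prems(2)] True p' obtain S where
        S: "recol_seq V E L \<phi> S" "unfrozen V E L (apply_seq \<phi> S) (last p')"
          "\<forall>(x, c) \<in> set S. x \<in> set p' - {last p'}" "length S \<le> length p' - 1" by auto
      show ?thesis using S lastp by (intro exI[of _ S]) auto
    next
      case False
      from recolour_ok[OF G Cons.prems(2) uV] Cons.prems(3) obtain c where
        c: "c \<in> L u" "c \<noteq> \<phi> u" "L_colouring V E L (\<phi>(u := c))" by auto
      have "unfrozen V E L (\<phi>(u := c)) q"
        using unfreeze[OF G, of L q \<phi> u c] euq c(2) LL qV False unfolding unfrozen_def by blast
      then have "unfrozen V E L (\<phi>(u := c)) (hd p')" using p' by simp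
      from Cons.IH[OF w' c(3) this] have "\<exists>S. recol_seq V E L (\<phi>(u := c)) S \<and> unfrozen V E L (apply_seq (\<phi>(u := c)) S) (last p')
          \<and> (\<forall>(x, c) \<in> set S. x \<in> set p' - {last p'}) \<and> length S \<le> length p' - 1" .
      then obtain S where
        S: "recol_seq V E L (\<phi>(u := c)) S" "unfrozen V E L (apply_seq (\<phi>(u := c)) S) (last p')"
          "\<forall>(x, c) \<in> set S. x \<in> set p' - {last p'}" "length S \<le> length p' - 1" by auto
      show ?thesis using S lastp c uV False p' \<open>u \<noteq> last (u # p')\<close>
        by (intro exI[of _ "(u, c) # S"]) auto
    qed
  qed
qed

lemma big_list_unfrozen:
  assumes G: "simple_graph V E" and fin: "finite (L v)" and cd: "card (L v) \<ge> deg V E v + 2"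
  shows "unfrozen V E L \<psi> v"
  unfolding unfrozen_def
proof
  assume fr: "frozen V E L \<psi> v"
  let ?N = "nbrs V E v"
  have fN: "finite ?N" using G by (rule nbrs_finite)
  have "L v - {\<psi> v} \<subseteq> \<psi> ` ?N"
  proof
    fix d assume "d \<in> L v - {\<psi> v}"
    then obtain x where "x \<in> ?N" "\<psi> x = d" using fr unfolding frozen_def by blast
    then show "d \<in> \<psi> ` ?N" by blast
  qed
  then have "card (L v - {\<psi> v}) \<le> card (\<psi> ` ?N)" using fN by (simp add: card_mono)
  also have "\<dots> \<le> card ?N" using fN card_image_le by blast
  finally have "card (L v) - 1 \<le> card ?N" using fin
    by (metis card_Diff_singleton_if diff_le_self le_trans)
  then show False using cd unfolding deg_def by simp
qed

theorem mainTheorem5: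
  fixes V :: "'v set" and E :: "'v \<Rightarrow> 'v \<Rightarrow> bool"
    and L :: "'v \<Rightarrow> 'c set" and \<alpha> :: "'v \<Rightarrow> 'c"
    and v w :: 'v and P :: "'v list"
  assumes "simple_graph V E" and "connected_graph V E"
    and "\<forall>u\<in>V. finite (L u) \<and> card (L u) \<ge> deg V E u + 1"
    and "L_colouring V E L \<alpha>"
    and "v \<in> V" and "w \<in> V"
    and "shortest_path V E v w P"
    and "unfrozen V E L \<alpha> v"
  shows "\<exists>S. recol_seq V E L \<alpha> S
           \<and> unfrozen V E L (apply_seq \<alpha> S) w
           \<and> (\<forall>(x, c) \<in> set S. x \<in> set P - {w})
           \<and> length S \<le> dist V E v w
           \<and> (card (L v) \<ge> deg V E v + 2 \<longrightarrow> unfrozen V E L (apply_seq \<alpha> S) v)"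
proof -
  have wk: "is_walk V E P" "hd P = v" "last P = w" "length P = Suc (dist V E v w)"
    using assms(7) unfolding shortest_path_def walk_between_def by auto
  from main_walk[OF assms(1) assms(3) wk(1) assms(4)] wk assms(8) obtain S where
    S: "recol_seq V E L \<alpha> S" "unfrozen V E L (apply_seq \<alpha> S) w"
      "\<forall>(x, c) \<in> set S. x \<in> set P - {w}" "length S \<le> dist V E v w" by auto
  have "card (L v) \<ge> deg V E v + 2 \<longrightarrow> unfrozen V E L (apply_seq \<alpha> S) v"
    using big_list_unfrozen[OF assms(1), of L v] assms(3,5) by auto
  then show ?thesis using S by blast
qed

end
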